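(* For every real $p>1$, the $p$-geometric rule satisfies $\kappa$-group representation for $\kappa(\alpha,\lambda)=\lceil\frac{p^{\lambda+1}}{\alpha(p-1)}\rceil$. That is, for every rational $\alpha\in(0,1]$, every $\lambda\in\mathbb N$, every profile $P$, every ranking $r$ that the $p$-geometric rule may output on $P$ (under any tie-breaking), and every group $N'$ that is $(\alpha,\lambda)$-significant in $P$, we have $\mathrm{avg}(N',r_{\le k})\ge\lambda$ where $k=\lceil\frac{p^{\lambda+1}}{\alpha(p-1)}\rceil$.
   Context: Let $N=[n]$ be a finite set of voters and $A$ a finite set of $m$ alternatives; a profile $P=(A_1,\dots,A_n)$ gives each voter $i$ a non-empty approval set $A_i\subseteq A$. A ranking $r=(r_1,\dots,r_m)$ is a linear order of $A$, $r_{\le k}=\{r_1,\dots,r_k\}$, with $r_{\le k}=A$ for $k\ge m$. For nonempty $N'\subseteq N$ and $S\subseteq A$, $\mathrm{avg}(N',S)=\frac1{|N'|}\sum_{i\in N'}|A_i\cap S|$. The cohesiveness of $N'$ is $\lambda(N')=|\bigcap_{i\in N'}A_i|$; $N'$ is $(\alpha,\lambda)$-significant in $P$ if $|N'|=\lceil\alpha n\rceil$ and $\lambda(N')\ge\lambda$. For a weight vector $\mathbf w=(w_1,w_2,\dots)$ of nonnegative reals and $S\subseteq A$, let $w(S)=\sum_{i\in N}\sum_{j=1}^{|A_i\cap S|}w_j$. The rule $\mathbf w$-RAV builds $r$ iteratively from the empty ranking: at step $k\in[m]$ it appends an unranked alternative $a$ maximizing $w(r_{\le k-1}\cup\{a\})-w(r_{\le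 k-1})$ (ties broken arbitrarily). The $p$-geometric rule is $\mathbf w$-RAV with $\mathbf w=(\frac1p,\frac1{p^2},\frac1{p^3},\dots)$. *)

theory Defs
  imports Complex_Main
begin

text \<open>A ranking is a duplicate-free list r enumerating A; r_{\<le>k} = set (take k r).\<close>

definition is_profile :: "'v set \<Rightarrow> 'a set \<Rightarrow> ('v \<Rightarrow> 'a set) \<Rightarrow> bool" where
  "is_profile N A P \<longleftrightarrow> finite N \<and> N \<noteq> {} \<and> finite A \<and> (\<forall>i\<in>N. P i \<noteq> {} \<and> P i \<subseteq> A)"

definition is_ranking :: "'a set \<Rightarrow> 'a list \<Rightarrow> bool" where
  "is_ranking A r \<longleftrightarrow> distinct r \<and> set r = A"

definition prefix_set :: "'a list \<Rightarrow> nat \<Rightarrow> 'a set" where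
  "prefix_set r k = set (take k r)"

definition avg :: "('v \<Rightarrow> 'a set) \<Rightarrow> 'v set \<Rightarrow> 'a set \<Rightarrow> real" where
  "avg P N' S = (\<Sum>i\<in>N'. real (card (P i \<inter> S))) / real (card N')"

definition cohesiveness :: "('v \<Rightarrow> 'a set) \<Rightarrow> 'v set \<Rightarrow> nat" where
  "cohesiveness P N' = card (\<Inter>i\<in>N'. P i)"

definition significant :: "'v set \<Rightarrow> ('v \<Rightarrow> 'a set) \<Rightarrow> real \<Rightarrow> nat \<Rightarrow> 'v set \<Rightarrow> bool" where
  "significant N P \<alpha> lam N' \<longleftrightarrow> N' \<noteq> {} \<and> N' \<subseteq> N \<and>
     int (card N') = \<lceil>\<alpha> * real (card N)\<rceil> \<and> cohesiveness P N' \<ge> lam"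

text \<open>Weight vector w indexed from 1: w 1, w 2, ...\<close>
definition wscore :: "(nat \<Rightarrow> real) \<Rightarrow> 'v set \<Rightarrow> ('v \<Rightarrow> 'a set) \<Rightarrow> 'a set \<Rightarrow> real" where
  "wscore w N P S = (\<Sum>i\<in>N. \<Sum>j=1..card (P i \<inter> S). w j)"

text \<open>r is a possible output of w-RAV (under some tie-breaking): at each step k (0-based index)
  the appended alternative maximizes the marginal gain among unranked alternatives.\<close>
definition wRAV_output :: "(nat \<Rightarrow> real) \<Rightarrow> 'v set \<Rightarrow> 'a set \<Rightarrow> ('v \<Rightarrow> 'a set) \<Rightarrow> 'a list \<Rightarrow> bool" where
  "wRAV_output w N A P r \<longleftrightarrow> is_ranking A r \<and>
     (\<forall>k < length r. \<forall>a \<in> A - prefix_set r k.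
        wscore w N P (prefix_set r k \<union> {a}) - wscore w N P (prefix_set r k)
        \<le> wscore w N P (prefix_set r k \<union> {r ! k}) - wscore w N P (prefix_set r k))"

definition geometric_weights :: "real \<Rightarrow> nat \<Rightarrow> real" where
  "geometric_weights p j = 1 / p ^ j"

end

theory Submission
  imports Defs
begin

lemma geo_sum_le:
  fixes p :: real assumes "p > 1"
  shows "(\<Sum>j=1..m. geometric_weights p j) = (1 - (1/p)^m) / (p - 1)"
proof (induction m)
  case 0 then show ?case by simp
next
  case (Suc m)
  have "(\<Sum>j=1..Suc m. geometric_weights p j) = (1 - (1/p)^m) / (p - 1) + 1/p^(Suc m)"
    using Suc by (simp add: geometric_weights_def)
  also have "\<dots> = (1 - (1/p)^Suc m) / (p - 1)"
    using assms by (simp add: field_simps power_one_over)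
  finally show ?case .
qed

lemma geo_sum_bound:
  fixes p :: real assumes "p > 1"
  shows "(\<Sum>j=1..m. geometric_weights p j) \<le> 1 / (p - 1)"
proof -
  have "0 \<le> (1/p)^m" using assms by simp
  hence "1 - (1/p)^m \<le> 1" by simp
  hence "(1 - (1/p)^m) / (p - 1) \<le> 1 / (p - 1)" using assms by (intro divide_right_mono) auto
  thus ?thesis using geo_sum_le[OF assms] by simp
qed

lemma pointwise:
  fixes p :: real and s lam :: nat assumes "p > 1"
  shows "1 / p ^ (s + 1) \<ge> (1 / p ^ (lam + 1)) * (1 + (real lam - real s) * ln p)"
proof -
  have e: "exp ((real lam - real s) * ln p) = p ^ lam / p ^ s"
  proof -
    have "exp ((real lam - real s) * ln p) = p powr (real lam - real s)" using assms by (simp add: powr_def)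
    also have "\<dots> = p ^ lam / p ^ s" using assms by (simp add: powr_diff powr_realpow)
    finally show ?thesis .
  qed
  have "1 + (real lam - real s) * ln p \<le> exp ((real lam - real s) * ln p)"
    by (rule exp_ge_add_one_self)
  hence "(1 / p ^ (lam + 1)) * (1 + (real lam - real s) * ln p) \<le> (1 / p ^ (lam + 1)) * (p ^ lam / p ^ s)"
    using assms e by (intro mult_left_mono) auto
  also have "\<dots> = 1 / p ^ (s + 1)" using assms by (simp add: field_simps)
  finally show ?thesis .
qed

lemma jensen:
  fixes p :: real and lam :: nat and s :: "'v \<Rightarrow> nat"
  assumes "p > 1" "finite M" "M \<noteq> {}" "(\<Sum>i\<in>M. real (s i)) < real lam * real (card M)"
  shows "(\<Sum>i\<in>M. 1 / p ^ (s i + 1)) > real (card M) / p ^ (lam + 1)"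
proof -
  have "(\<Sum>i\<in>M. 1 / p ^ (s i + 1)) \<ge> (\<Sum>i\<in>M. (1 / p ^ (lam + 1)) * (1 + (real lam - real (s i)) * ln p))"
    by (intro sum_mono pointwise assms)
  also have "(\<Sum>i\<in>M. (1 / p ^ (lam + 1)) * (1 + (real lam - real (s i)) * ln p))
     = (1 / p ^ (lam + 1)) * (real (card M) + ln p * (real lam * real (card M) - (\<Sum>i\<in>M. real (s i))))"
    by (simp add: sum_distrib_left sum.distrib sum_subtractf algebra_simps sum_distrib_right[symmetric] add_divide_distrib)
  finally have *: "(\<Sum>i\<in>M. 1 / p ^ (s i + 1)) \<ge> (1 / p ^ (lam + 1)) * (real (card M) + ln p * (real lam * real (card M) - (\<Sum>i\<in>M. real (s i))))" .
  have "ln p > 0" using assms by simp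
  hence "ln p * (real lam * real (card M) - (\<Sum>i\<in>M. real (s i))) > 0" using assms(4) by simp
  hence "(1 / p ^ (lam + 1)) * (real (card M) + ln p * (real lam * real (card M) - (\<Sum>i\<in>M. real (s i)))) > (1 / p ^ (lam + 1)) * real (card M)"
    using assms(1) by (intro mult_strict_left_mono) auto
  with * show ?thesis by simp
qed

lemma gw_nonneg: "p > 1 \<Longrightarrow> geometric_weights p j \<ge> 0"
  by (simp add: geometric_weights_def)

lemma partial_mono:
  assumes "p > 1" "m \<le> m'"
  shows "(\<Sum>j=1..m. geometric_weights p j) \<le> (\<Sum>j=1..m'. geometric_weights p j)"
  using assms by (intro sum_mono2) (auto simp: gw_nonneg)

lemma gain:
  fixes p :: real
  assumes "p > 1" "is_profile N A P" "N' \<subseteq> N" "a \<in> A - S" "\<forall>i\<in>N'. a \<in> P i"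
  shows "wscore (geometric_weights p) N P (S \<union> {a}) - wscore (geometric_weights p) N P S
     \<ge> (\<Sum>i\<in>N'. 1 / p ^ (card (P i \<inter> S) + 1))"
proof -
  let ?w = "geometric_weights p"
  define d where "d i = (\<Sum>j=1..card (P i \<inter> (S \<union> {a})). ?w j) - (\<Sum>j=1..card (P i \<inter> S). ?w j)" for i
  have fN: "finite N" using assms(2) by (simp add: is_profile_def)
  have fin: "finite (P i)" if "i \<in> N" for i
    using assms(2) that unfolding is_profile_def by (meson finite_subset)
  have eq: "wscore ?w N P (S \<union> {a}) - wscore ?w N P S = (\<Sum>i\<in>N. d i)"
    by (simp add: wscore_def d_def sum_subtractf)
  have dn: "d i \<ge> 0" if "i \<in> N" for i
  proof -
    have "card (P i \<inter> S) \<le> card (P i \<inter> (S \<union> {a}))"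
      using fin[OF that] by (intro card_mono) auto
    thus ?thesis unfolding d_def using partial_mono[OF assms(1)] by fastforce
  qed
  have dN': "d i = 1 / p ^ (card (P i \<inter> S) + 1)" if "i \<in> N'" for i
  proof -
    have "P i \<inter> (S \<union> {a}) = insert a (P i \<inter> S)" using assms(5) that by auto
    moreover have "finite (P i \<inter> S)" using fin assms(3) that by auto
    ultimately have "card (P i \<inter> (S \<union> {a})) = Suc (card (P i \<inter> S))"
      using assms(4) by simp
    thus ?thesis unfolding d_def by (simp add: geometric_weights_def)
  qed
  have "(\<Sum>i\<in>N'. 1 / p ^ (card (P i \<inter> S) + 1)) = (\<Sum>i\<in>N'. d i)"
    using dN' by simp
  also have "\<dots> \<le> (\<Sum>i\<in>N. d i)"
    using fN assms(3) dn by (intro sum_mono2) auto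
  finally show ?thesis using eq by simp
qed

theorem theorem5:
  fixes p \<alpha> :: real and lam :: nat and N :: "'v set" and A :: "'a set"
    and P :: "'v \<Rightarrow> 'a set" and r :: "'a list" and N' :: "'v set"
  assumes "p > 1"
    and "\<alpha> \<in> \<rat>" and "0 < \<alpha>" and "\<alpha> \<le> 1"
    and "is_profile N A P"
    and "wRAV_output (geometric_weights p) N A P r"
    and "significant N P \<alpha> lam N'"
  shows "avg P N' (prefix_set r (nat \<lceil>p ^ (lam + 1) / (\<alpha> * (p - 1))\<rceil>)) \<ge> real lam"
proof -
  let ?w = "geometric_weights p"
  define K where "K = p ^ (lam + 1) / (\<alpha> * (p - 1))"
  define k where "k = nat \<lceil>K\<rceil>"
  define C where "C = (\<Inter>i\<in>N'. P i)"
  define n' where "n' = card N'"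
  have p1: "p > 1" by fact
  have prof: "finite N" "N \<noteq> {}" "finite A" "\<forall>i\<in>N. P i \<noteq> {} \<and> P i \<subseteq> A"
    using assms(5) by (auto simp: is_profile_def)
  have sig: "N' \<noteq> {}" "N' \<subseteq> N" "int (card N') = \<lceil>\<alpha> * real (card N)\<rceil>" "card C \<ge> lam"
    using assms(7) by (auto simp: significant_def cohesiveness_def C_def)
  have rk: "distinct r" "set r = A" and opt: "\<forall>t < length r. \<forall>a \<in> A - prefix_set r t.
        wscore ?w N P (prefix_set r t \<union> {a}) - wscore ?w N P (prefix_set r t)
        \<le> wscore ?w N P (prefix_set r t \<union> {r ! t}) - wscore ?w N P (prefix_set r t)"
    using assms(6) by (auto simp: wRAV_output_def is_ranking_def)
  have fN': "finite N'" using sig prof finite_subset by blast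
  have n'pos: "n' > 0" using sig fN' by (simp add: n'_def card_gt_0_iff)
  have CA: "C \<subseteq> A" using sig prof unfolding C_def by blast
  have CP: "\<forall>i\<in>N'. C \<subseteq> P i" unfolding C_def by blast
  have finP: "finite (P i)" if "i \<in> N" for i using prof that finite_subset by blast
  have cover: "(\<Sum>i\<in>N'. real (card (P i \<inter> S))) \<ge> real lam * real n'" if "C \<subseteq> S" for S
  proof -
    have "\<forall>i\<in>N'. real lam \<le> real (card (P i \<inter> S))"
    proof
      fix i assume i: "i \<in> N'"
      have "card C \<le> card (P i \<inter> S)" using CP i that finP sig(2) by (intro card_mono) auto
      thus "real lam \<le> real (card (P i \<inter> S))" using sig(4) by simp
    qed
    hence "(\<Sum>i\<in>N'. real lam) \<le> (\<Sum>i\<in>N'. real (card (P i \<inter> S)))" by (intro sum_mono) auto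
    thus ?thesis by (simp add: n'_def mult.commute)
  qed
  show ?thesis
  proof (rule ccontr)
    assume "\<not> ?thesis"
    hence "\<not> real lam \<le> (\<Sum>i\<in>N'. real (card (P i \<inter> prefix_set r k))) / real n'"
      unfolding avg_def k_def K_def n'_def .
    hence lt: "(\<Sum>i\<in>N'. real (card (P i \<inter> prefix_set r k))) < real lam * real n'"
      using pos_le_divide_eq[of "real n'" "real lam" "(\<Sum>i\<in>N'. real (card (P i \<inter> prefix_set r k)))"] n'pos
      by simp
    have klen: "k < length r"
    proof (rule ccontr)
      assume "\<not> k < length r"
      hence "prefix_set r k = A" using rk by (simp add: prefix_set_def)
      thus False using cover[of "prefix_set r k"] CA lt by simp
    qed
    define g where "g t = wscore ?w N P (prefix_set r (Suc t)) - wscore ?w N P (prefix_set r t)" for t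
    have gbig: "g t > real n' / p ^ (lam + 1)" if t: "t < k" for t
    proof -
      have sub: "prefix_set r t \<subseteq> prefix_set r k" using t unfolding prefix_set_def
        by (simp add: set_take_subset_set_take)
      have "(\<Sum>i\<in>N'. real (card (P i \<inter> prefix_set r t))) \<le> (\<Sum>i\<in>N'. real (card (P i \<inter> prefix_set r k)))"
        using sub finP sig(2) by (intro sum_mono) (auto intro!: card_mono)
      hence ltt: "(\<Sum>i\<in>N'. real (card (P i \<inter> prefix_set r t))) < real lam * real n'" using lt by linarith
      have "\<not> C \<subseteq> prefix_set r t"
      proof
        assume "C \<subseteq> prefix_set r t"
        from cover[OF this] ltt show False by linarith
      qed
      then obtain c where c: "c \<in> C" "c \<notin> prefix_set r t" by blast
      have cA: "c \<in> A - prefix_set r t" using c CA by blast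
      have "real n' / p ^ (lam + 1) < (\<Sum>i\<in>N'. 1 / p ^ (card (P i \<inter> prefix_set r t) + 1))"
        using jensen[OF p1 fN' sig(1), of "\<lambda>i. card (P i \<inter> prefix_set r t)" lam] ltt
        unfolding n'_def by blast
      also have "\<dots> \<le> wscore ?w N P (prefix_set r t \<union> {c}) - wscore ?w N P (prefix_set r t)"
        using gain[OF p1 assms(5) sig(2) cA] CP c(1) by blast
      also have "\<dots> \<le> wscore ?w N P (prefix_set r t \<union> {r ! t}) - wscore ?w N P (prefix_set r t)"
        using opt klen t cA by auto
      also have "prefix_set r t \<union> {r ! t} = prefix_set r (Suc t)"
        using klen t by (simp add: prefix_set_def take_Suc_conv_app_nth)
      finally show ?thesis unfolding g_def .
    qed
    have kpos: "k > 0"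
    proof -
      have "K > 0" unfolding K_def using p1 assms(3) by simp
      thus ?thesis unfolding k_def by simp
    qed
    have "(\<Sum>t<k. g t) = wscore ?w N P (prefix_set r k) - wscore ?w N P (prefix_set r 0)"
      unfolding g_def by (rule sum_lessThan_telescope)
    also have "wscore ?w N P (prefix_set r 0) = 0" by (simp add: wscore_def prefix_set_def)
    finally have tel: "(\<Sum>t<k. g t) = wscore ?w N P (prefix_set r k)" by simp
    have "(\<Sum>t<k. real n' / p ^ (lam + 1)) < (\<Sum>t<k. g t)"
      using kpos gbig by (intro sum_strict_mono) auto
    hence low: "real k * (real n' / p ^ (lam + 1)) < wscore ?w N P (prefix_set r k)" using tel by simp
    have "wscore ?w N P (prefix_set r k) \<le> (\<Sum>i\<in>N. 1 / (p - 1))"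
      unfolding wscore_def by (intro sum_mono geo_sum_bound p1)
    hence up: "wscore ?w N P (prefix_set r k) \<le> real (card N) / (p - 1)" by simp
    have kK: "real k \<ge> K" unfolding k_def by linarith
    have n'a: "real n' \<ge> \<alpha> * real (card N)"
      using sig(3) unfolding n'_def by (metis ceiling_le_iff le_of_int_ceiling of_int_of_nat_eq)
    have "real (card N) / (p - 1) = K * (\<alpha> * real (card N)) / p ^ (lam + 1)"
      unfolding K_def using p1 assms(3) by (simp add: field_simps)
    also have "\<dots> \<le> real k * real n' / p ^ (lam + 1)"
    proof (intro divide_right_mono mult_mono kK n'a)
      show "0 \<le> real k" by simp
      show "0 \<le> \<alpha> * real (card N)" using assms(3) by simp
      show "0 \<le> p ^ (lam + 1)" using p1 by simp
    qed
    finally show False using low up by simp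
  qed
qed

end
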